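(* Let $A=\langle Q,\delta,\gamma,F\rangle$ be a finitely supported pomset automaton. Then for every $q\in Q$ there exists a pomset automaton $A_q$ with finitely many states and a state $q'$ of $A_q$ such that $L_A(q)=L_{A_q}(q')$.
   Context: Fix a finite alphabet $\Sigma$; pomsets are isomorphism classes of $\Sigma$-labelled posets, $1$ the empty pomset, $a\in\Sigma$ the one-point pomset, $\cdot$ and $\parallel$ sequential and parallel composition, $\mathsf{Pom}^{\mathsf{sp}}$ the smallest set containing $1$ and all $a$ closed under both. A PA is $A=\langle Q,\delta,\gamma,F\rangle$ with $F\subseteq Q$, $\delta:Q\times\Sigma\to Q$, $\gamma:Q^3\to Q$, with states $\bot\notin F$, $\top\in F$ such that $\delta(\bot,a)=\delta(\top,a)=\bot$ and $\gamma(\bot,r,s)=\gamma(\top,r,s)=\bot$. Traces: the smallest relation with $q\xrightarrow{1}_A q$; $q\xrightarrow{a}_A\delta(q,a)$; $q\xrightarrow{U}_A q''\xrightarrow{V}_A q'$ implies $q\xrightarrow{U\cdot V}_A q'$; $r\xrightarrow{U}_A r'\in F$, $s\xrightarrow{V}_A s'\in F$ imply $q\xrightarrow{U\parallel V}_A\gamma(q,r,s)$. $L_A(q)=\{U:\exists q'\in F.\ q\xrightarrow{U}_A q'\}$. The trace dependency relation $\preceq_A$ is the smallest preorder on $Q$ with $r,s\preceq_A q$ whenever $\gamma(q,r,s)\neq\bot$, $\delta(q,a)\preceq_A q$ for all $a$, and $\gamma(q,r,s)\preceq_A q$ for all $r,s$. The support $\pi_A(q)$ is the smallest $\preceq_A$-downward-closed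 subset of $Q$ containing $q$; $A$ is finitely supported if $\pi_A(q)$ is finite for every $q$. *)

theory Defs
  imports Main
begin

text \<open>A (finite) labelled poset with carrier a finite set of naturals.
  Every finite labelled poset is isomorphic to one of this form.\<close>
type_synonym 'a lposet = "nat set \<times> (nat \<times> nat) set \<times> (nat \<Rightarrow> 'a)"

fun wf_lposet :: "'a lposet \<Rightarrow> bool" where
  "wf_lposet (C, R, l) \<longleftrightarrow> finite C \<and> R \<subseteq> C \<times> C \<and> refl_on C R \<and> antisym R \<and> trans R"

fun lposet_iso :: "'a lposet \<Rightarrow> 'a lposet \<Rightarrow> bool" where
  "lposet_iso (C, R, l) (C', R', l') \<longleftrightarrow>
     (\<exists>f. bij_betw f C C' \<and> (\<forall>x\<in>C. \<forall>y\<in>C. (x, y) \<in> R \<longleftrightarrow> (f x, f y) \<in> R')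
          \<and> (\<forall>x\<in>C. l' (f x) = l x))"

text \<open>A pomset is an isomorphism class of labelled posets.\<close>
type_synonym 'a pomset = "'a lposet set"

definition pom_of :: "'a lposet \<Rightarrow> 'a pomset" where
  "pom_of P = {P'. wf_lposet P' \<and> lposet_iso P P'}"

definition lp_empty :: "'a lposet" where
  "lp_empty = ({}, {}, \<lambda>_. undefined)"

definition lp_atom :: "'a \<Rightarrow> 'a lposet" where
  "lp_atom a = ({0}, {(0, 0)}, \<lambda>_. a)"

fun lp_seq :: "'a lposet \<Rightarrow> 'a lposet \<Rightarrow> 'a lposet" where
  "lp_seq (C, R, l) (C', R', l') =
     ((\<lambda>x. 2 * x) ` C \<union> (\<lambda>x. 2 * x + 1) ` C',
      (\<lambda>(x, y). (2 * x, 2 * y)) ` R \<union> (\<lambda>(x, y). (2 * x + 1, 2 * y + 1)) ` R'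
        \<union> {(2 * x, 2 * y + 1) | x y. x \<in> C \<and> y \<in> C'},
      \<lambda>n. if even n then l (n div 2) else l' (n div 2))"

fun lp_par :: "'a lposet \<Rightarrow> 'a lposet \<Rightarrow> 'a lposet" where
  "lp_par (C, R, l) (C', R', l') =
     ((\<lambda>x. 2 * x) ` C \<union> (\<lambda>x. 2 * x + 1) ` C',
      (\<lambda>(x, y). (2 * x, 2 * y)) ` R \<union> (\<lambda>(x, y). (2 * x + 1, 2 * y + 1)) ` R',
      \<lambda>n. if even n then l (n div 2) else l' (n div 2))"

definition pom_one :: "'a pomset" where
  "pom_one = pom_of lp_empty"

definition pom_atom :: "'a \<Rightarrow> 'a pomset" where
  "pom_atom a = pom_of (lp_atom a)"

text \<open>Sequential and parallel composition of pomsets (computed on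
  representatives, which is independent of the choice up to isomorphism).\<close>
definition pom_seq :: "'a pomset \<Rightarrow> 'a pomset \<Rightarrow> 'a pomset" where
  "pom_seq U V = (\<Union>u\<in>U. \<Union>v\<in>V. pom_of (lp_seq u v))"

definition pom_par :: "'a pomset \<Rightarrow> 'a pomset \<Rightarrow> 'a pomset" where
  "pom_par U V = (\<Union>u\<in>U. \<Union>v\<in>V. pom_of (lp_par u v))"

text \<open>A pomset automaton with state set \<open>pa_Q\<close> (a subset of the state type),
  transition functions (only their values on \<open>pa_Q\<close> matter), accepting
  states, and the distinguished states \<open>\<bottom>\<close> and \<open>\<top>\<close>.\<close>
record ('q, 'a) pa =
  pa_Q :: "'q set"
  pa_delta :: "'q \<Rightarrow> 'a \<Rightarrow> 'q"
  pa_gamma :: "'q \<Rightarrow> 'q \<Rightarrow> 'q \<Rightarrow> 'q"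
  pa_F :: "'q set"
  pa_bot :: 'q
  pa_top :: 'q

definition is_pa :: "('q, 'a) pa \<Rightarrow> bool" where
  "is_pa A \<longleftrightarrow>
     pa_F A \<subseteq> pa_Q A \<and> pa_bot A \<in> pa_Q A \<and> pa_top A \<in> pa_Q A
     \<and> pa_bot A \<notin> pa_F A \<and> pa_top A \<in> pa_F A
     \<and> (\<forall>q\<in>pa_Q A. \<forall>a. pa_delta A q a \<in> pa_Q A)
     \<and> (\<forall>q\<in>pa_Q A. \<forall>r\<in>pa_Q A. \<forall>s\<in>pa_Q A. pa_gamma A q r s \<in> pa_Q A)
     \<and> (\<forall>a. pa_delta A (pa_bot A) a = pa_bot A \<and> pa_delta A (pa_top A) a = pa_bot A)
     \<and> (\<forall>r\<in>pa_Q A. \<forall>s\<in>pa_Q A.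
           pa_gamma A (pa_bot A) r s = pa_bot A \<and> pa_gamma A (pa_top A) r s = pa_bot A)"

inductive pa_trace :: "('q, 'a) pa \<Rightarrow> 'q \<Rightarrow> 'a pomset \<Rightarrow> 'q \<Rightarrow> bool"
  for A :: "('q, 'a) pa" where
  tr_one: "q \<in> pa_Q A \<Longrightarrow> pa_trace A q pom_one q"
| tr_atom: "q \<in> pa_Q A \<Longrightarrow> pa_trace A q (pom_atom a) (pa_delta A q a)"
| tr_seq: "pa_trace A q U q'' \<Longrightarrow> pa_trace A q'' V q' \<Longrightarrow> pa_trace A q (pom_seq U V) q'"
| tr_par: "q \<in> pa_Q A \<Longrightarrow> pa_trace A r U r' \<Longrightarrow> r' \<in> pa_F A \<Longrightarrow>
           pa_trace A s V s' \<Longrightarrow> s' \<in> pa_F A \<Longrightarrow>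
           pa_trace A q (pom_par U V) (pa_gamma A q r s)"

definition pa_lang :: "('q, 'a) pa \<Rightarrow> 'q \<Rightarrow> 'a pomset set" where
  "pa_lang A q = {U. \<exists>q'\<in>pa_F A. pa_trace A q U q'}"

text \<open>Generating steps of the trace dependency relation: \<open>(p, q)\<close> means \<open>p \<preceq> q\<close>.\<close>
definition pa_dep_step :: "('q, 'a) pa \<Rightarrow> ('q \<times> 'q) set" where
  "pa_dep_step A =
     {(r, q) | q r s. q \<in> pa_Q A \<and> r \<in> pa_Q A \<and> s \<in> pa_Q A \<and> pa_gamma A q r s \<noteq> pa_bot A}
   \<union> {(s, q) | q r s. q \<in> pa_Q A \<and> r \<in> pa_Q A \<and> s \<in> pa_Q A \<and> pa_gamma A q r s \<noteq> pa_bot A}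
   \<union> {(pa_delta A q a, q) | q a. q \<in> pa_Q A}
   \<union> {(pa_gamma A q r s, q) | q r s. q \<in> pa_Q A \<and> r \<in> pa_Q A \<and> s \<in> pa_Q A}"

definition pa_dep :: "('q, 'a) pa \<Rightarrow> ('q \<times> 'q) set" where
  "pa_dep A = Restr ((pa_dep_step A)\<^sup>*) (pa_Q A)"

definition pa_support :: "('q, 'a) pa \<Rightarrow> 'q \<Rightarrow> 'q set" where
  "pa_support A q = \<Inter>{S. S \<subseteq> pa_Q A \<and> q \<in> S \<and> (\<forall>p p'. (p, p') \<in> pa_dep A \<and> p' \<in> S \<longrightarrow> p \<in> S)}"

definition finitely_supported :: "('q, 'a) pa \<Rightarrow> bool" where
  "finitely_supported A \<longleftrightarrow> (\<forall>q\<in>pa_Q A. finite (pa_support A q))"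

end

theory Submission
  imports Defs
begin

lemma trace_in_Q:
  assumes "is_pa A"
  shows "pa_trace A p U p' \<Longrightarrow> p \<in> pa_Q A \<and> p' \<in> pa_Q A"
proof (induction rule: pa_trace.induct)
  case (tr_par q r U r' s V s')
  then show ?case using assms unfolding is_pa_def by blast
qed (use assms in \<open>auto simp: is_pa_def\<close>)

lemma trace_bot:
  assumes "is_pa A"
  shows "pa_trace A p U p' \<Longrightarrow> p = pa_bot A \<Longrightarrow> p' = pa_bot A"
proof (induction rule: pa_trace.induct)
  case (tr_par q r U r' s V s')
  then show ?case using assms trace_in_Q[OF assms] unfolding is_pa_def by metis
qed (use assms in \<open>auto simp: is_pa_def\<close>)

lemma trace_closed:
  assumes "is_pa A"
    and S2: "\<And>p a. p \<in> S \<Longrightarrow> pa_delta A p a \<in> S"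
    and S3: "\<And>p r s. p \<in> S \<Longrightarrow> r \<in> pa_Q A \<Longrightarrow> s \<in> pa_Q A \<Longrightarrow> pa_gamma A p r s \<in> S"
  shows "pa_trace A p U p' \<Longrightarrow> p \<in> S \<Longrightarrow> p' \<in> S"
proof (induction rule: pa_trace.induct)
  case (tr_par q r U r' s V s')
  then show ?case using S3 trace_in_Q[OF assms(1)] by blast
qed (use S2 in auto)

theorem mainTheorem6:
  fixes A :: "('q, 'a::finite) pa"
  assumes "is_pa A"
    and "finitely_supported A"
    and "q \<in> pa_Q A"
  shows "\<exists>B :: (nat, 'a) pa. is_pa B \<and> finite (pa_Q B) \<and>
           (\<exists>q'\<in>pa_Q B. pa_lang A q = pa_lang B q')"
proof -
  note isA = assms(1)
  define S0 where "S0 = pa_support A q"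
  define S where "S = S0 \<union> {pa_bot A, pa_top A}"
  have finS0: "finite S0" using assms(2,3) unfolding finitely_supported_def S0_def by blast
  have S0Q: "S0 \<subseteq> pa_Q A" unfolding S0_def pa_support_def
    using assms(3) by (auto simp: pa_dep_def)
  have qS0: "q \<in> S0" unfolding S0_def pa_support_def by auto
  have S0cl: "x \<in> S0" if "(x, p) \<in> pa_dep_step A" "x \<in> pa_Q A" "p \<in> S0" for x p
  proof -
    have "(x, p) \<in> pa_dep A" using that S0Q unfolding pa_dep_def by auto
    then show ?thesis using that(3) unfolding S0_def pa_support_def by blast
  qed
  have SQ: "S \<subseteq> pa_Q A" using S0Q isA unfolding S_def is_pa_def by auto
  have finS: "finite S" using finS0 unfolding S_def by auto
  have qS: "q \<in> S" using qS0 unfolding S_def by auto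
  have botS: "pa_bot A \<in> S" and topS: "pa_top A \<in> S" unfolding S_def by auto
  have S2: "pa_delta A p a \<in> S" if "p \<in> S" for p a
  proof (cases "p \<in> S0")
    case True
    then have "(pa_delta A p a, p) \<in> pa_dep_step A" using S0Q unfolding pa_dep_step_def by blast
    moreover have "pa_delta A p a \<in> pa_Q A" using True S0Q isA unfolding is_pa_def by blast
    ultimately show ?thesis using S0cl True unfolding S_def by blast
  next
    case False
    then show ?thesis using that isA unfolding S_def is_pa_def by auto
  qed
  have S3: "pa_gamma A p r s \<in> S" if "p \<in> S" "r \<in> pa_Q A" "s \<in> pa_Q A" for p r s
  proof (cases "p \<in> S0")
    case True
    then have "(pa_gamma A p r s, p) \<in> pa_dep_step A" using S0Q that unfolding pa_dep_step_def by blast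
    moreover have "pa_gamma A p r s \<in> pa_Q A" using True S0Q isA that unfolding is_pa_def by blast
    ultimately show ?thesis using S0cl True unfolding S_def by blast
  next
    case False
    then show ?thesis using that isA unfolding S_def is_pa_def by auto
  qed
  have S4: "r \<in> S \<and> s \<in> S" if "p \<in> S" "r \<in> pa_Q A" "s \<in> pa_Q A" "pa_gamma A p r s \<noteq> pa_bot A" for p r s
  proof (cases "p \<in> S0")
    case True
    then have "(r, p) \<in> pa_dep_step A" "(s, p) \<in> pa_dep_step A"
      using S0Q that unfolding pa_dep_step_def by blast+
    then show ?thesis using S0cl True that unfolding S_def by blast
  next
    case False
    then show ?thesis using that isA unfolding S_def is_pa_def by auto
  qed
  obtain g :: "'q \<Rightarrow> nat" and n where g: "g ` S = {i. i < n}" "inj_on g S"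
    using finite_imp_inj_to_nat_seg[OF finS] by blast
  define h where "h = inv_into S g"
  have hg: "h (g x) = x" if "x \<in> S" for x using g(2) that unfolding h_def by simp
  have hS: "h m \<in> S" if "m \<in> g ` S" for m using that unfolding h_def by (simp add: inv_into_into)
  have gh: "g (h m) = m" if "m \<in> g ` S" for m using that unfolding h_def by (simp add: f_inv_into_f)
  define B :: "(nat, 'a) pa" where "B = \<lparr>pa_Q = g ` S,
      pa_delta = (\<lambda>m a. g (pa_delta A (h m) a)),
      pa_gamma = (\<lambda>m r s. g (pa_gamma A (h m) (h r) (h s))),
      pa_F = g ` (pa_F A \<inter> S), pa_bot = g (pa_bot A), pa_top = g (pa_top A)\<rparr>"
  have isB: "is_pa B"
  proof -
    have "g (pa_bot A) \<notin> g ` (pa_F A \<inter> S)"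
      using g(2) botS isA unfolding is_pa_def inj_on_def by blast
    moreover have "\<forall>m\<in>g ` S. \<forall>a. g (pa_delta A (h m) a) \<in> g ` S" using S2 hS by blast
    moreover have "\<forall>m\<in>g ` S. \<forall>r\<in>g ` S. \<forall>s\<in>g ` S. g (pa_gamma A (h m) (h r) (h s)) \<in> g ` S"
      using S3 hS SQ by blast
    moreover have "\<forall>a. g (pa_delta A (h (g (pa_bot A))) a) = g (pa_bot A)
         \<and> g (pa_delta A (h (g (pa_top A))) a) = g (pa_bot A)"
      using hg botS topS isA unfolding is_pa_def by simp
    moreover have "\<forall>r\<in>g ` S. \<forall>s\<in>g ` S. g (pa_gamma A (h (g (pa_bot A))) (h r) (h s)) = g (pa_bot A)
         \<and> g (pa_gamma A (h (g (pa_top A))) (h r) (h s)) = g (pa_bot A)"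
      using hg botS topS isA hS SQ unfolding is_pa_def by (metis subsetD)
    ultimately show ?thesis using botS topS isA unfolding is_pa_def B_def by auto
  qed
  have LA: "pa_trace A p U p' \<Longrightarrow> p \<in> S \<Longrightarrow> p' \<noteq> pa_bot A \<Longrightarrow> pa_trace B (g p) U (g p')" for p U p'
  proof (induction rule: pa_trace.induct)
    case (tr_one q)
    then show ?case using pa_trace.tr_one[of "g q" B] by (simp add: B_def)
  next
    case (tr_atom q a)
    then show ?case using pa_trace.tr_atom[of "g q" B a] by (simp add: B_def hg)
  next
    case (tr_seq q U q'' V q')
    have "q'' \<noteq> pa_bot A" using tr_seq trace_bot[OF isA] by blast
    moreover have "q'' \<in> S" using tr_seq trace_closed[OF isA S2 S3] by blast
    ultimately show ?case using tr_seq pa_trace.tr_seq by metis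
  next
    case (tr_par q r U r' s V s')
    have rQ: "r \<in> pa_Q A" "s \<in> pa_Q A" using tr_par trace_in_Q[OF isA] by blast+
    have rs: "r \<in> S" "s \<in> S" using S4 rQ tr_par by blast+
    have r'S: "r' \<in> S" "s' \<in> S" using rs tr_par trace_closed[OF isA S2 S3] by blast+
    have nb: "r' \<noteq> pa_bot A" "s' \<noteq> pa_bot A" using tr_par isA unfolding is_pa_def by blast+
    have "pa_trace B (g q) (pom_par U V) (pa_gamma B (g q) (g r) (g s))"
      apply (rule pa_trace.tr_par[where r'="g r'" and s'="g s'"])
      using tr_par rs r'S nb by (auto simp: B_def)
    then show ?case using tr_par rs by (simp add: B_def hg)
  qed
  have LB: "pa_trace B m U m' \<Longrightarrow> pa_trace A (h m) U (h m')" for m U m'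
  proof (induction rule: pa_trace.induct)
    case (tr_one q)
    then show ?case using pa_trace.tr_one[of "h q" A] hS SQ by (auto simp: B_def)
  next
    case (tr_atom q a)
    then show ?case using pa_trace.tr_atom[of "h q" A a] hS SQ S2 hg by (auto simp: B_def)
  next
    case (tr_seq q U q'' V q')
    then show ?case using pa_trace.tr_seq by metis
  next
    case (tr_par q r U r' s V s')
    have rQ: "r \<in> g ` S" "s \<in> g ` S" using tr_par trace_in_Q[OF isB] by (auto simp: B_def)
    have F: "h r' \<in> pa_F A" "h s' \<in> pa_F A" using tr_par hg by (auto simp: B_def)
    have "pa_trace A (h q) (pom_par U V) (pa_gamma A (h q) (h r) (h s))"
      apply (rule pa_trace.tr_par[where r'="h r'" and s'="h s'"])
      using tr_par F hS SQ by (auto simp: B_def)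
    moreover have "pa_gamma A (h q) (h r) (h s) \<in> S"
    proof -
      have "q \<in> g ` S" using tr_par by (simp add: B_def)
      then show ?thesis using S3 hS rQ SQ by blast
    qed
    ultimately show ?case using hg by (simp add: B_def)
  qed
  have "pa_lang A q = pa_lang B (g q)"
  proof
    show "pa_lang A q \<subseteq> pa_lang B (g q)"
    proof
      fix U assume "U \<in> pa_lang A q"
      then obtain p' where p': "p' \<in> pa_F A" "pa_trace A q U p'" unfolding pa_lang_def by blast
      have "p' \<noteq> pa_bot A" using p' isA unfolding is_pa_def by blast
      moreover have "p' \<in> S" using p' qS trace_closed[OF isA S2 S3] by blast
      ultimately show "U \<in> pa_lang B (g q)" using LA p' qS unfolding pa_lang_def
        by (auto simp: B_def)
    qed
  next
    show "pa_lang B (g q) \<subseteq> pa_lang A q"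
    proof
      fix U assume "U \<in> pa_lang B (g q)"
      then obtain m' where m': "m' \<in> pa_F B" "pa_trace B (g q) U m'" unfolding pa_lang_def by blast
      have "h m' \<in> pa_F A" using m' hg by (auto simp: B_def)
      then show "U \<in> pa_lang A q" using LB[OF m'(2)] hg qS unfolding pa_lang_def by auto
    qed
  qed
  moreover have "finite (pa_Q B)" using finS by (simp add: B_def)
  moreover have "g q \<in> pa_Q B" using qS by (simp add: B_def)
  ultimately show ?thesis using isB by blast
qed

end
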